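(* Consider the mini-batch method described in the context, and suppose Assumption A1 holds. Let $\tau>0$ be arbitrary, $A_\tau=8L^2+16\tau L^2$, $B_\tau=8\tau+8$. Then for any $\check x\in\mathcal{X}$, any $z\in\mathbb{R}^d$, all $i\in V$ and all $k\ge0$, $$\|x_i(k+1)-\check x\|^2\le(1+A_\tau\alpha_k^2)\|v_i(k)-\check x\|^2-2\alpha_k\big(f_i(z)-f_i(\check x)\big)-\tfrac34\|\psi_i^1(k)-v_i(k)\|^2+\Big(\tfrac{3}{8\tau}+2\alpha_kL\Big)\|v_i(k)-z\|^2+B_\tau\alpha_k^2G_f^2.$$
   Context: Setting. There are $m$ agents $V=\{1,\dots,m\}$. Agent $i$ has $f_i:\mathbb{R}^d\to\mathbb{R}$ and $\mathcal{X}_i=\bigcap_{j\in I_i}\mathcal{X}_i^j$, with $I_1,\dots,I_m$ a partition of a finite index set; $\mathcal{X}=\bigcap_i\mathcal{X}_i$. $\Pi_Y$ is Euclidean projection onto closed convex $Y$. With weight matrices $W(k)$, stepsizes $\alpha_k>0$ and batch size $b\ge1$, the mini-batch method starts from $x_i(0)$ and for $k\ge0$ sets $v_i(k)=\sum_j[W(k)]_{ij}x_j(k)$, $\psi_i^0(k)=v_i(k)-\alpha_k\nabla f_i(v_i(k))$, $\psi_i^r(k)=\Pi_{\mathcal{X}_i^{\Omega_i^r(k)}}[\psi_i^{r-1}(k)]$ for $r=1,\dots,b$, and $x_i(k+1)=\psi_i^b(k)$, where each $\Omega_i^r(k)$ takes values in $I_i$ (the claim holds for every realization). (A1) Each $\mathcal{X}_i^j$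 is closed and convex; each $f_i$ is convex and differentiable with $\|\nabla f_i(x)-\nabla f_i(y)\|\le L\|x-y\|$ for all $x,y$; and $\|\nabla f_i(x)\|\le G_f$ for all $x\in\mathcal{X}$, $i\in V$. *)

theory Defs
  imports "HOL-Analysis.Analysis"
begin

end

theory Submission
  imports Defs
begin


lemma tangent_ineq:
  fixes f :: "'a::euclidean_space \<Rightarrow> real"
  assumes cf: "convex_on UNIV f" and d: "(f has_derivative (\<lambda>h. g \<bullet> h)) (at x)"
  shows "f x + g \<bullet> (y - x) \<le> f y"
proof -
  define h where "h t = f (x + t *\<^sub>R (y - x))" for t :: real
  have ch: "convex_on UNIV h"
  proof (rule convex_onI)
    fix t a b :: real assume t: "0 < t" "t < 1"
    have "x + ((1 - t) *\<^sub>R a + t *\<^sub>R b) *\<^sub>R (y - x)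
        = (1 - t) *\<^sub>R (x + a *\<^sub>R (y - x)) + t *\<^sub>R (x + b *\<^sub>R (y - x))"
      by (simp add: algebra_simps)
    then show "h ((1 - t) *\<^sub>R a + t *\<^sub>R b) \<le> (1 - t) * h a + t * h b"
      unfolding h_def using convex_onD[OF cf, of t] t by simp
  qed simp
  have d1: "((\<lambda>t::real. x + t *\<^sub>R (y - x)) has_derivative (\<lambda>t. t *\<^sub>R (y - x))) (at 0)"
    by (auto intro!: derivative_eq_intros)
  have d2: "(f has_derivative (\<lambda>h. g \<bullet> h)) (at ((\<lambda>t::real. x + t *\<^sub>R (y - x)) 0))"
    using d by simp
  have "(h has_derivative (\<lambda>t. g \<bullet> (t *\<^sub>R (y - x)))) (at 0)"
    unfolding h_def using diff_chain_at[OF d1 d2] by (simp add: o_def)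
  moreover have "(\<lambda>t. g \<bullet> (t *\<^sub>R (y - x))) = (*) (g \<bullet> (y - x))"
    by (auto simp: algebra_simps)
  ultimately have "(h has_field_derivative (g \<bullet> (y - x))) (at 0 within UNIV)"
    by (simp add: has_field_derivative_def)
  from convex_on_imp_above_tangent[OF ch _ _ _ this, of 1]
  have "h 1 - h 0 \<ge> g \<bullet> (y - x)" by simp
  then show ?thesis unfolding h_def by simp
qed

lemma proj_ineq:
  fixes u y :: "'a::euclidean_space"
  assumes "convex S" "closed S" "y \<in> S"
  shows "(norm (closest_point S u - y))\<^sup>2 \<le> (norm (u - y))\<^sup>2 - (norm (closest_point S u - u))\<^sup>2"
proof -
  let ?p = "closest_point S u"
  have ne: "S \<noteq> {}" using assms by auto
  have "inner (u - ?p) (y - ?p) \<le> 0"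
    using any_closest_point_dot[OF assms(1,2) closest_point_in_set[OF assms(2) ne] assms(3)]
      closest_point_exists(2)[OF assms(2) ne] by blast
  moreover have "u - y = (u - ?p) - (y - ?p)" by simp
  hence "(norm (u - y))\<^sup>2 = (norm (u - ?p))\<^sup>2 + (norm (y - ?p))\<^sup>2 - 2 * inner (u - ?p) (y - ?p)"
    by (simp add: power2_norm_eq_inner inner_diff_left inner_diff_right inner_commute)
  ultimately show ?thesis by (simp add: norm_minus_commute)
qed

lemma young2:
  fixes a b e :: real assumes "e > 0"
  shows "2 * a * b \<le> e * a\<^sup>2 + b\<^sup>2 / e"
proof -
  have "0 \<le> (e * a - b)\<^sup>2 / e" using assms by simp
  also have "\<dots> = e * a\<^sup>2 + b\<^sup>2 / e - 2 * a * b" using assms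
    by (simp add: power2_eq_square field_simps)
  finally show ?thesis by simp
qed

theorem lemma8:
  fixes m :: nat and J :: "nat set" and I :: "nat \<Rightarrow> nat set"
    and Xs :: "nat \<Rightarrow> 'a::euclidean_space set"
    and f :: "nat \<Rightarrow> 'a \<Rightarrow> real" and gf :: "nat \<Rightarrow> 'a \<Rightarrow> 'a"
    and L Gf :: real
    and W :: "nat \<Rightarrow> nat \<Rightarrow> nat \<Rightarrow> real" and \<alpha> :: "nat \<Rightarrow> real" and b :: nat
    and \<Omega> :: "nat \<Rightarrow> nat \<Rightarrow> nat \<Rightarrow> nat"
    and x v :: "nat \<Rightarrow> nat \<Rightarrow> 'a" and \<psi> :: "nat \<Rightarrow> nat \<Rightarrow> nat \<Rightarrow> 'a"
    and \<tau> :: real and xc z :: 'a and i k :: nat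
  defines "X \<equiv> \<Inter>j\<in>J. Xs j"
  assumes J_fin: "finite J"
    and part_sub: "\<forall>i\<in>{1..m}. I i \<subseteq> J \<and> I i \<noteq> {}"
    and part_disj: "\<forall>i1\<in>{1..m}. \<forall>i2\<in>{1..m}. i1 \<noteq> i2 \<longrightarrow> I i1 \<inter> I i2 = {}"
    and part_cover: "(\<Union>i\<in>{1..m}. I i) = J"
    and Xs_closed: "\<forall>j\<in>J. closed (Xs j)"
    and Xs_convex: "\<forall>j\<in>J. convex (Xs j)"
    and f_convex: "\<forall>i\<in>{1..m}. convex_on UNIV (f i)"
    and f_grad: "\<forall>i\<in>{1..m}. \<forall>y. (f i has_derivative (\<lambda>h. gf i y \<bullet> h)) (at y)"
    and grad_lip: "\<forall>i\<in>{1..m}. \<forall>y w. norm (gf i y - gf i w) \<le> L * norm (y - w)"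
    and grad_bdd: "\<forall>i\<in>{1..m}. \<forall>y\<in>X. norm (gf i y) \<le> Gf"
    and alpha_pos: "\<forall>k. \<alpha> k > 0"
    and b_pos: "b \<ge> 1"
    and Omega_in: "\<forall>i\<in>{1..m}. \<forall>r\<in>{1..b}. \<forall>k. \<Omega> i r k \<in> I i"
    and v_eq: "\<forall>i\<in>{1..m}. \<forall>k. v i k = (\<Sum>j\<in>{1..m}. W k i j *\<^sub>R x j k)"
    and psi0_eq: "\<forall>i\<in>{1..m}. \<forall>k. \<psi> i 0 k = v i k - \<alpha> k *\<^sub>R gf i (v i k)"
    and psi_eq: "\<forall>i\<in>{1..m}. \<forall>r\<in>{1..b}. \<forall>k.
                   \<psi> i r k = closest_point (Xs (\<Omega> i r k)) (\<psi> i (r - 1) k)"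
    and x_eq: "\<forall>i\<in>{1..m}. \<forall>k. x i (Suc k) = \<psi> i b k"
    and tau_pos: "\<tau> > 0"
    and xc_in: "xc \<in> X"
    and i_in: "i \<in> {1..m}"
  shows "(norm (x i (Suc k) - xc))\<^sup>2
         \<le> (1 + (8 * L\<^sup>2 + 16 * \<tau> * L\<^sup>2) * (\<alpha> k)\<^sup>2) * (norm (v i k - xc))\<^sup>2
           - 2 * \<alpha> k * (f i z - f i xc)
           - 3 / 4 * (norm (\<psi> i 1 k - v i k))\<^sup>2
           + (3 / (8 * \<tau>) + 2 * \<alpha> k * L) * (norm (v i k - z))\<^sup>2
           + (8 * \<tau> + 8) * (\<alpha> k)\<^sup>2 * Gf\<^sup>2"
  
proof -
  let ?S = "\<lambda>r. Xs (\<Omega> i r k)"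
  let ?g = "gf i (v i k)"
  let ?v = "v i k"
  let ?a = "\<alpha> k"
  have xcJ: "\<forall>j\<in>J. xc \<in> Xs j" using xc_in unfolding X_def by auto
  have Sprops: "convex (?S r) \<and> closed (?S r) \<and> xc \<in> ?S r" if "r \<in> {1..b}" for r
  proof -
    have "\<Omega> i r k \<in> J" using Omega_in i_in that part_sub by blast
    thus ?thesis using Xs_convex Xs_closed xcJ by blast
  qed
  have chain: "1 \<le> r \<longrightarrow> r \<le> b \<longrightarrow> norm (\<psi> i r k - xc) \<le> norm (\<psi> i 1 k - xc)" for r
  proof (induction r)
    case 0 then show ?case by simp
  next
    case (Suc r)
    show ?case
    proof (intro impI)
      assume h: "1 \<le> Suc r" "Suc r \<le> b"
      show "norm (\<psi> i (Suc r) k - xc) \<le> norm (\<psi> i 1 k - xc)"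
      proof (cases "r = 0")
        case True then show ?thesis by simp
      next
        case False
        have r1: "Suc r \<in> {1..b}" using h by auto
        have e: "\<psi> i (Suc r) k = closest_point (?S (Suc r)) (\<psi> i r k)"
          using psi_eq i_in r1 by auto
        have "norm (\<psi> i (Suc r) k - xc) \<le> norm (\<psi> i r k - xc)"
        proof -
          let ?c = "closest_point (?S (Suc r)) (\<psi> i r k)"
          have A: "(norm (?c - xc))\<^sup>2 \<le> (norm (\<psi> i r k - xc))\<^sup>2 - (norm (?c - \<psi> i r k))\<^sup>2"
            using proj_ineq[of "?S (Suc r)" xc "\<psi> i r k"] Sprops[OF r1] by blast
          have "(norm (?c - xc))\<^sup>2 \<le> (norm (\<psi> i r k - xc))\<^sup>2"
            using A zero_le_power2[of "norm (?c - \<psi> i r k)"] by linarith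
          then have "(norm (\<psi> i (Suc r) k - xc))\<^sup>2 \<le> (norm (\<psi> i r k - xc))\<^sup>2"
            using e by simp
          thus ?thesis by (rule power2_le_imp_le) simp
        qed
        also have "\<dots> \<le> norm (\<psi> i 1 k - xc)" using Suc.IH False h by auto
        finally show ?thesis .
      qed
    qed
  qed
  have b1: "1 \<in> {1..b}" using b_pos by auto
  have x_le: "norm (x i (Suc k) - xc) \<le> norm (\<psi> i 1 k - xc)"
    using chain[of b] b_pos x_eq i_in by auto
  have e1: "\<psi> i 1 k = closest_point (?S 1) (\<psi> i 0 k)" using psi_eq i_in b1 by auto
  have p1: "(norm (\<psi> i 1 k - xc))\<^sup>2 \<le> (norm (\<psi> i 0 k - xc))\<^sup>2 - (norm (\<psi> i 1 k - \<psi> i 0 k))\<^sup>2"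
    using proj_ineq[of "?S 1" xc "\<psi> i 0 k"] Sprops[OF b1] e1 by simp
  have ps0: "\<psi> i 0 k = ?v - ?a *\<^sub>R ?g" using psi0_eq i_in by auto
  let ?p = "\<psi> i 1 k"
  have ident: "(norm (\<psi> i 0 k - xc))\<^sup>2 - (norm (?p - \<psi> i 0 k))\<^sup>2
      = (norm (?v - xc))\<^sup>2 - (norm (?p - ?v))\<^sup>2 - 2 * ?a * (?g \<bullet> (?p - xc))"
    unfolding ps0
    by (simp add: power2_norm_eq_inner inner_diff_left inner_diff_right inner_commute algebra_simps)
  have cvx: "convex_on UNIV (f i)" and dif: "\<And>y. (f i has_derivative (\<lambda>h. gf i y \<bullet> h)) (at y)"
    using f_convex f_grad i_in by auto
  have lip: "\<And>y w. norm (gf i y - gf i w) \<le> L * norm (y - w)" using grad_lip i_in by auto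
  have t1: "f i ?v + ?g \<bullet> (xc - ?v) \<le> f i xc" by (rule tangent_ineq[OF cvx dif])
  have t2: "f i z + gf i z \<bullet> (?v - z) \<le> f i ?v" by (rule tangent_ineq[OF cvx dif])
  have L0: "L \<ge> 0"
  proof -
    obtain e :: 'a where "e \<noteq> 0" using nonzero_Basis by blast
    have "0 \<le> L * norm e" using order_trans[OF norm_ge_zero[of "gf i e - gf i 0"] lip[of e 0]] by simp
    moreover have "norm e > 0" using \<open>e \<noteq> 0\<close> by simp
    ultimately show ?thesis by (simp add: zero_le_mult_iff)
  qed
  have t3: "(gf i z - ?g) \<bullet> (?v - z) \<ge> - (L * (norm (?v - z))\<^sup>2)"
  proof -
    have "\<bar>(gf i z - ?g) \<bullet> (?v - z)\<bar> \<le> norm (gf i z - ?g) * norm (?v - z)"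
      by (rule Cauchy_Schwarz_ineq2)
    also have "\<dots> \<le> L * norm (z - ?v) * norm (?v - z)"
      using lip[of z ?v] by (simp add: mult_right_mono)
    finally show ?thesis by (simp add: norm_minus_commute power2_eq_square)
  qed
  have G0: "norm (gf i xc) \<le> Gf" using grad_bdd i_in xc_in by auto
  have gnorm: "norm ?g \<le> Gf + L * norm (?v - xc)"
  proof -
    have "norm ?g \<le> norm (gf i xc) + norm (?g - gf i xc)" by (rule norm_triangle_sub)
    thus ?thesis using G0 lip[of ?v xc] by linarith
  qed
  have gsq: "(norm ?g)\<^sup>2 \<le> 2 * Gf\<^sup>2 + 2 * L\<^sup>2 * (norm (?v - xc))\<^sup>2"
  proof -
    have "(norm ?g)\<^sup>2 \<le> (Gf + L * norm (?v - xc))\<^sup>2"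
      using gnorm by (simp add: power_mono)
    also have "\<dots> \<le> 2 * Gf\<^sup>2 + 2 * L\<^sup>2 * (norm (?v - xc))\<^sup>2"
    proof -
      have "0 \<le> (Gf - L * norm (?v - xc))\<^sup>2" by simp
      thus ?thesis by (simp add: power2_eq_square algebra_simps)
    qed
    finally show ?thesis .
  qed
  have apos: "?a > 0" using alpha_pos by auto
  have y1: "2 * ?a * (?g \<bullet> (z - ?v)) \<le> 3 / (8 * \<tau>) * (norm (?v - z))\<^sup>2 + 8 * \<tau> / 3 * ?a\<^sup>2 * (norm ?g)\<^sup>2"
  proof -
    have "2 * ?a * (?g \<bullet> (z - ?v)) \<le> 2 * (norm (?v - z)) * (?a * norm ?g)"
    proof -
      have "?g \<bullet> (z - ?v) \<le> norm ?g * norm (z - ?v)" by (rule norm_cauchy_schwarz)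
      from mult_left_mono[OF this, of "2 * ?a"] apos show ?thesis
        by (simp add: norm_minus_commute algebra_simps)
    qed
    also have "\<dots> \<le> 3 / (8 * \<tau>) * (norm (?v - z))\<^sup>2 + (?a * norm ?g)\<^sup>2 / (3 / (8 * \<tau>))"
      by (rule young2) (use tau_pos in simp)
    finally show ?thesis by (simp add: power_mult_distrib field_simps)
  qed
  have y2: "2 * ?a * (?g \<bullet> (?v - ?p)) \<le> 1 / 4 * (norm (?p - ?v))\<^sup>2 + 4 * ?a\<^sup>2 * (norm ?g)\<^sup>2"
  proof -
    have "2 * ?a * (?g \<bullet> (?v - ?p)) \<le> 2 * (norm (?p - ?v)) * (?a * norm ?g)"
    proof -
      have "?g \<bullet> (?v - ?p) \<le> norm ?g * norm (?v - ?p)" by (rule norm_cauchy_schwarz)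
      from mult_left_mono[OF this, of "2 * ?a"] apos show ?thesis
        by (simp add: norm_minus_commute algebra_simps)
    qed
    also have "\<dots> \<le> 1 / 4 * (norm (?p - ?v))\<^sup>2 + (?a * norm ?g)\<^sup>2 / (1 / 4)"
      by (rule young2) simp
    finally show ?thesis by (simp add: power_mult_distrib field_simps)
  qed
  have inner_sub: "(gf i z - ?g) \<bullet> (?v - z) = gf i z \<bullet> (?v - z) + ?g \<bullet> (z - ?v)"
    by (simp add: inner_diff_left inner_diff_right)
  have key: "- (?g \<bullet> (?p - xc)) \<le> f i xc - f i z + L * (norm (?v - z))\<^sup>2 + ?g \<bullet> (z - ?v) + ?g \<bullet> (?v - ?p)"
  proof -
    have id: "- (?g \<bullet> (?p - xc)) = ?g \<bullet> (xc - ?v) + ?g \<bullet> (?v - ?p)"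
      by (simp add: inner_diff_right)
    show ?thesis unfolding id using t1 t2 t3 inner_sub by linarith
  qed
  have key2: "- 2 * ?a * (?g \<bullet> (?p - xc)) \<le> 2 * ?a * (f i xc - f i z) + 2 * ?a * L * (norm (?v - z))\<^sup>2
      + 2 * ?a * (?g \<bullet> (z - ?v)) + 2 * ?a * (?g \<bullet> (?v - ?p))"
    using mult_left_mono[OF key, of "2 * ?a"] apos by (simp add: algebra_simps)
  have gsq2: "?a\<^sup>2 * (norm ?g)\<^sup>2 \<le> 2 * ?a\<^sup>2 * Gf\<^sup>2 + 2 * L\<^sup>2 * ?a\<^sup>2 * (norm (?v - xc))\<^sup>2"
    using mult_left_mono[OF gsq, of "?a\<^sup>2"] by (simp add: algebra_simps)
  have tp: "\<tau> * (?a\<^sup>2 * (norm ?g)\<^sup>2) \<le> \<tau> * (2 * ?a\<^sup>2 * Gf\<^sup>2 + 2 * L\<^sup>2 * ?a\<^sup>2 * (norm (?v - xc))\<^sup>2)"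
    using mult_left_mono[OF gsq2, of \<tau>] tau_pos by simp
  have nn: "0 \<le> \<tau> * ?a\<^sup>2 * Gf\<^sup>2" "0 \<le> \<tau> * L\<^sup>2 * ?a\<^sup>2 * (norm (?v - xc))\<^sup>2"
    "0 \<le> ?a * L * (norm (?v - z))\<^sup>2"
    using tau_pos apos L0 by auto
  have sq: "(norm (x i (Suc k) - xc))\<^sup>2 \<le> (norm (?p - xc))\<^sup>2"
    using x_le by (simp add: power_mono)
  show ?thesis using sq p1 ident key2 y1 y2 gsq2 tp nn
  proof -
    have c1: "8 * \<tau> / 3 * ?a\<^sup>2 * (norm ?g)\<^sup>2 \<le> 8 * \<tau> * ?a\<^sup>2 * Gf\<^sup>2 + 16 * \<tau> * L\<^sup>2 * ?a\<^sup>2 * (norm (?v - xc))\<^sup>2"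
      using tp nn by (simp add: algebra_simps)
    have c2: "4 * ?a\<^sup>2 * (norm ?g)\<^sup>2 \<le> 8 * ?a\<^sup>2 * Gf\<^sup>2 + 8 * L\<^sup>2 * ?a\<^sup>2 * (norm (?v - xc))\<^sup>2"
      using gsq2 by simp
    have "(norm (x i (Suc k) - xc))\<^sup>2 \<le> (norm (?v - xc))\<^sup>2 - 3 / 4 * (norm (?p - ?v))\<^sup>2
        + 2 * ?a * (f i xc - f i z) + 2 * ?a * L * (norm (?v - z))\<^sup>2 + 3 / (8 * \<tau>) * (norm (?v - z))\<^sup>2
        + 8 * \<tau> * ?a\<^sup>2 * Gf\<^sup>2 + 16 * \<tau> * L\<^sup>2 * ?a\<^sup>2 * (norm (?v - xc))\<^sup>2
        + 8 * ?a\<^sup>2 * Gf\<^sup>2 + 8 * L\<^sup>2 * ?a\<^sup>2 * (norm (?v - xc))\<^sup>2"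
      using sq p1 ident key2 y1 y2 c1 c2 by linarith
    thus ?thesis by (simp add: algebra_simps)
  qed
qed

end
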